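(* Let $\mathcal A$ be a transitive Lie algebroid over $M$ with kernel $\mathcal L$ and let $\widehat g$ be an inner non-degenerate metric on $\mathcal A$. Then there exists a unique ordinary connection $\nabla^{\widehat g}$ on $\mathcal A$ such that $\widehat g(\nabla^{\widehat g}_X,\iota(\gamma))=0$ for all $X\in\Gamma(TM)$ and all $\gamma\in\mathcal L$.
   Context: A transitive Lie algebroid over $M$ is a finitely generated projective $C^\infty(M)$-module $\mathcal A$ with a Lie bracket and a surjective $C^\infty(M)$-linear Lie morphism $\rho:\mathcal A\to\Gamma(TM)$ with $[X,fY]=f[X,Y]+(\rho(X)f)Y$; its kernel $\mathcal L=\ker\rho$ is the space of sections of a vector bundle $\mathbb L$ (a locally trivial bundle of Lie algebras), and $\iota:\mathcal L\to\mathcal A$ is the inclusion. A metric on $\mathcal A$ is a symmetric $C^\infty(M)$-bilinear map $\widehat g:\mathcal A\otimes_{C^\infty(M)}\mathcal A\to C^\infty(M)$ (not assumed non-degenerate). It is inner non-degenerate if $h(\gamma,\eta)=\widehat g(\iota\gamma,\iota\eta)$ is a non-degenerate metric on the vector bundle $\mathbb L$. An ordinary connection is a $C^\infty(M)$-linear map $\nabla:\Gamma(TM)\to\mathcal A$ with $\rho\circ\nabla=\mathrm{id}$. *)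

theory Defs
  imports Complex_Main "HOL-Library.Function_Algebras"
begin

text \<open>
  The ring of smooth functions
  C-infinity(M) is an abstract commutative real algebra 'r; the module of vector fields
  Gamma(TM) is an abstract 'r-module 't acting on 'r by derivations (act); the Lie
  algebroid A is an 'r-module 'a.
\<close>

text \<open>The free module R^n, realised inside nat => 'r as the maps vanishing from n on.\<close>
definition free_scale :: "'r::comm_ring_1 \<Rightarrow> (nat \<Rightarrow> 'r) \<Rightarrow> (nat \<Rightarrow> 'r)" where
  "free_scale r v = (\<lambda>k. r * v k)"

definition fg_projective :: "('r::comm_ring_1 \<Rightarrow> 'b::ab_group_add \<Rightarrow> 'b) \<Rightarrow> bool" where
  "fg_projective s \<longleftrightarrow> module s \<and>
     (\<exists>(n::nat) (i :: 'b \<Rightarrow> nat \<Rightarrow> 'r) (p :: (nat \<Rightarrow> 'r) \<Rightarrow> 'b).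
        module_hom s free_scale i \<and> module_hom free_scale s p \<and>
        (\<forall>b k. n \<le> k \<longrightarrow> i b k = 0) \<and> (\<forall>b. p (i b) = b))"

definition real_lie_bracket ::
  "('r::{comm_ring_1,real_algebra_1} \<Rightarrow> 'b::ab_group_add \<Rightarrow> 'b) \<Rightarrow> ('b \<Rightarrow> 'b \<Rightarrow> 'b) \<Rightarrow> bool" where
  "real_lie_bracket s br \<longleftrightarrow>
     (\<forall>x y z. br (x + y) z = br x z + br y z) \<and>
     (\<forall>(c::real) x y. br (s (of_real c) x) y = s (of_real c) (br x y)) \<and>
     (\<forall>x. br x x = 0) \<and>
     (\<forall>x y z. br x (br y z) + br y (br z x) + br z (br x y) = 0)"

text \<open>Vector fields: an f.g. projective 'r-module 't, a faithful R-linear action on 'r by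
  derivations, exhausting all derivations (Gamma(TM) = Der(C-infinity(M))), with the
  commutator Lie bracket.\<close>
definition vector_fields ::
  "('r::{comm_ring_1,real_algebra_1} \<Rightarrow> 't::ab_group_add \<Rightarrow> 't) \<Rightarrow> ('t \<Rightarrow> 'r \<Rightarrow> 'r) \<Rightarrow> ('t \<Rightarrow> 't \<Rightarrow> 't) \<Rightarrow> bool" where
  "vector_fields sT act brT \<longleftrightarrow>
     fg_projective sT \<and>
     (\<forall>X f g. act X (f + g) = act X f + act X g) \<and>
     (\<forall>X f g. act X (f * g) = f * act X g + g * act X f) \<and>
     (\<forall>X (c::real). act X (of_real c) = 0) \<and>
     (\<forall>X Y f. act (X + Y) f = act X f + act Y f) \<and>
     (\<forall>X h f. act (sT h X) f = h * act X f) \<and>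
     (\<forall>X Y. act X = act Y \<longrightarrow> X = Y) \<and>
     (\<forall>D. ((\<forall>f g. D (f + g) = D f + D g) \<and> (\<forall>f g. D (f * g) = f * D g + g * D f) \<and>
           (\<forall>(c::real). D (of_real c) = 0)) \<longrightarrow> (\<exists>X. act X = D)) \<and>
     real_lie_bracket sT brT \<and>
     (\<forall>X Y f. act (brT X Y) f = act X (act Y f) - act Y (act X f))"

definition transitive_lie_algebroid ::
  "('r::{comm_ring_1,real_algebra_1} \<Rightarrow> 't::ab_group_add \<Rightarrow> 't) \<Rightarrow> ('t \<Rightarrow> 'r \<Rightarrow> 'r) \<Rightarrow> ('t \<Rightarrow> 't \<Rightarrow> 't) \<Rightarrow>
   ('r \<Rightarrow> 'a::ab_group_add \<Rightarrow> 'a) \<Rightarrow> ('a \<Rightarrow> 'a \<Rightarrow> 'a) \<Rightarrow> ('a \<Rightarrow> 't) \<Rightarrow> bool" where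
  "transitive_lie_algebroid sT act brT sA brA \<rho> \<longleftrightarrow>
     vector_fields sT act brT \<and>
     fg_projective sA \<and>
     real_lie_bracket sA brA \<and>
     module_hom sA sT \<rho> \<and> surj \<rho> \<and>
     (\<forall>x y. \<rho> (brA x y) = brT (\<rho> x) (\<rho> y)) \<and>
     (\<forall>x y f. brA x (sA f y) = sA f (brA x y) + sA (act (\<rho> x) f) y)"

text \<open>The kernel L = ker rho (the inclusion iota is the identity on elements).\<close>
definition algebroid_kernel :: "('a \<Rightarrow> 't::ab_group_add) \<Rightarrow> 'a set" where
  "algebroid_kernel \<rho> = {x. \<rho> x = 0}"

definition algebroid_metric ::
  "('r::comm_ring_1 \<Rightarrow> 'a::ab_group_add \<Rightarrow> 'a) \<Rightarrow> ('a \<Rightarrow> 'a \<Rightarrow> 'r) \<Rightarrow> bool" where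
  "algebroid_metric sA g \<longleftrightarrow>
     (\<forall>x y. g x y = g y x) \<and>
     (\<forall>x y z. g (x + y) z = g x z + g y z) \<and>
     (\<forall>f x y. g (sA f x) y = f * g x y)"

text \<open>Inner non-degeneracy: h(gamma,eta) = g(iota gamma, iota eta) is a non-degenerate
  metric on L, i.e. gamma |-> h(gamma, -) is a bijection from L onto Hom_R(L, R).\<close>
definition inner_nondegenerate ::
  "('r::comm_ring_1 \<Rightarrow> 'a::ab_group_add \<Rightarrow> 'a) \<Rightarrow> ('a \<Rightarrow> 't::ab_group_add) \<Rightarrow> ('a \<Rightarrow> 'a \<Rightarrow> 'r) \<Rightarrow> bool" where
  "inner_nondegenerate sA \<rho> g \<longleftrightarrow>
     (\<forall>\<phi> :: 'a \<Rightarrow> 'r.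
        ((\<forall>x\<in>algebroid_kernel \<rho>. \<forall>y\<in>algebroid_kernel \<rho>. \<phi> (x + y) = \<phi> x + \<phi> y) \<and>
         (\<forall>f. \<forall>x\<in>algebroid_kernel \<rho>. \<phi> (sA f x) = f * \<phi> x)) \<longrightarrow>
        (\<exists>!\<gamma>. \<gamma> \<in> algebroid_kernel \<rho> \<and> (\<forall>\<eta>\<in>algebroid_kernel \<rho>. g \<gamma> \<eta> = \<phi> \<eta>)))"

definition ordinary_connection ::
  "('r::comm_ring_1 \<Rightarrow> 't::ab_group_add \<Rightarrow> 't) \<Rightarrow> ('r \<Rightarrow> 'a::ab_group_add \<Rightarrow> 'a) \<Rightarrow> ('a \<Rightarrow> 't) \<Rightarrow> ('t \<Rightarrow> 'a) \<Rightarrow> bool" where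
  "ordinary_connection sT sA \<rho> nabla \<longleftrightarrow> module_hom sT sA nabla \<and> (\<forall>X. \<rho> (nabla X) = X)"

end

theory Submission
  imports Defs
begin

lemma fun_sum_apply: "(\<Sum>k\<in>A. (f k :: nat \<Rightarrow> 'r::comm_ring_1)) j = (\<Sum>k\<in>A. f k j)"
  by (induct A rule: infinite_finite_induct) (auto simp: plus_fun_def zero_fun_def)

lemma splitting:
  fixes sT :: "'r::comm_ring_1 \<Rightarrow> 't::ab_group_add \<Rightarrow> 't"
    and sA :: "'r \<Rightarrow> 'a::ab_group_add \<Rightarrow> 'a" and \<rho> :: "'a \<Rightarrow> 't"
  assumes fg: "fg_projective sT" and hom: "module_hom sA sT \<rho>" and su: "surj \<rho>"
  shows "\<exists>s. module_hom sT sA s \<and> (\<forall>X. \<rho> (s X) = X)"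
proof -
  from fg obtain n and i :: "'t \<Rightarrow> nat \<Rightarrow> 'r" and p :: "(nat \<Rightarrow> 'r) \<Rightarrow> 't" where
    mT: "module sT" and hi: "module_hom sT free_scale i" and hp: "module_hom free_scale sT p"
    and van: "\<forall>b k. n \<le> k \<longrightarrow> i b k = 0" and pi: "\<forall>b. p (i b) = b"
    unfolding fg_projective_def by blast
  interpret A: module sA using hom by (simp add: module_hom_def)
  interpret T: module sT by (rule mT)
  interpret R: module_hom sA sT \<rho> by (rule hom)
  interpret I: module_hom sT free_scale i by (rule hi)
  interpret P: module_hom free_scale sT p by (rule hp)
  define e where "e k = (\<lambda>j::nat. if j = k then (1::'r) else 0)" for k
  define a where "a k = (SOME a. \<rho> a = p (e k))" for k
  have ra: "\<rho> (a k) = p (e k)" for k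
    unfolding a_def by (rule someI_ex) (use su in \<open>metis surj_def\<close>)
  define s where "s X = (\<Sum>k<n. sA (i X k) (a k))" for X
  have decomp: "(\<Sum>k<n. free_scale (i X k) (e k)) = i X" for X
  proof
    fix j
    have "(\<Sum>k<n. free_scale (i X k) (e k)) j = (\<Sum>k<n. i X k * (if j = k then 1 else 0))"
      by (simp add: fun_sum_apply free_scale_def e_def)
    also have "\<dots> = (\<Sum>k\<in>{..<n}. if k = j then i X k else 0)"
      by (rule sum.cong) auto
    also have "\<dots> = i X j" using van by (simp add: sum.delta)
    finally show "(\<Sum>k<n. free_scale (i X k) (e k)) j = i X j" .
  qed
  have "\<rho> (s X) = X" for X
  proof -
    have "\<rho> (s X) = (\<Sum>k<n. sT (i X k) (p (e k)))"
      by (simp add: s_def R.sum R.scale ra)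
    also have "\<dots> = (\<Sum>k<n. p (free_scale (i X k) (e k)))"
      by (simp add: P.scale)
    also have "\<dots> = p (\<Sum>k<n. free_scale (i X k) (e k))"
      by (simp add: P.sum)
    also have "\<dots> = X" by (simp add: decomp pi)
    finally show ?thesis .
  qed
  moreover have "module_hom sT sA s"
  proof -
    have "s (X + Y) = s X + s Y" for X Y
      by (simp add: s_def I.add A.scale_left_distrib sum.distrib)
    moreover have "s (sT h X) = sA h (s X)" for h X
      by (simp add: s_def I.scale free_scale_def A.scale_sum_right)
    ultimately show ?thesis
      by (simp add: module_hom_def module_hom_axioms_def mT A.module_axioms)
  qed
  ultimately show ?thesis by blast
qed

theorem proposition2p6:
  fixes sT :: "'r::{comm_ring_1,real_algebra_1} \<Rightarrow> 't::ab_group_add \<Rightarrow> 't"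
    and act :: "'t \<Rightarrow> 'r \<Rightarrow> 'r" and brT :: "'t \<Rightarrow> 't \<Rightarrow> 't"
    and sA :: "'r \<Rightarrow> 'a::ab_group_add \<Rightarrow> 'a" and brA :: "'a \<Rightarrow> 'a \<Rightarrow> 'a"
    and \<rho> :: "'a \<Rightarrow> 't" and g :: "'a \<Rightarrow> 'a \<Rightarrow> 'r"
  assumes "transitive_lie_algebroid sT act brT sA brA \<rho>"
    and "algebroid_metric sA g"
    and "inner_nondegenerate sA \<rho> g"
  shows "\<exists>!nabla. ordinary_connection sT sA \<rho> nabla \<and>
           (\<forall>X. \<forall>\<gamma>\<in>algebroid_kernel \<rho>. g (nabla X) \<gamma> = 0)"
proof -
  from assms(1) have vf: "vector_fields sT act brT" and fgA: "fg_projective sA"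
    and hom: "module_hom sA sT \<rho>" and su: "surj \<rho>"
    unfolding transitive_lie_algebroid_def by auto
  from vf have fgT: "fg_projective sT" unfolding vector_fields_def by auto
  obtain s where hs: "module_hom sT sA s" and rs: "\<And>X. \<rho> (s X) = X"
    using splitting[OF fgT hom su] by blast
  interpret R: module_hom sA sT \<rho> by (rule hom)
  have mA: "module sA" using fgA by (simp add: fg_projective_def)
  have mT: "module sT" using fgT by (simp add: fg_projective_def)
  interpret S: module_hom sT sA s by (rule hs)
  define K where "K = algebroid_kernel \<rho>"
  have Kmem: "x \<in> K \<longleftrightarrow> \<rho> x = 0" for x by (simp add: K_def algebroid_kernel_def)
  from assms(2) have gsym: "\<And>x y. g x y = g y x" and gadd: "\<And>x y z. g (x + y) z = g x z + g y z"
    and gsc: "\<And>f x y. g (sA f x) y = f * g x y" unfolding algebroid_metric_def by auto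
  have gdiff: "g (x - y) z = g x z - g y z" for x y z
    using gadd[of "x - y" y z] by (simp add: algebra_simps)
  have g0: "g 0 z = 0" for z using gdiff[of 0 0 z] by simp
  have nd: "\<exists>!\<gamma>. \<gamma> \<in> K \<and> (\<forall>\<eta>\<in>K. g \<gamma> \<eta> = g c \<eta>)" for c
  proof -
    have "(\<forall>x\<in>K. \<forall>y\<in>K. g c (x + y) = g c x + g c y) \<and> (\<forall>f. \<forall>x\<in>K. g c (sA f x) = f * g c x)"
      by (metis gsym gadd gsc)
    moreover have "\<forall>\<phi>::'a \<Rightarrow> 'r. ((\<forall>x\<in>K. \<forall>y\<in>K. \<phi> (x + y) = \<phi> x + \<phi> y) \<and>
         (\<forall>f. \<forall>x\<in>K. \<phi> (sA f x) = f * \<phi> x)) \<longrightarrow>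
        (\<exists>!\<gamma>. \<gamma> \<in> K \<and> (\<forall>\<eta>\<in>K. g \<gamma> \<eta> = \<phi> \<eta>))"
      using assms(3) unfolding inner_nondegenerate_def K_def by blast
    ultimately show ?thesis by (rule mp[OF spec[where x="g c"], rotated])
  qed
  have uniq: "\<gamma>1 = \<gamma>2" if "\<gamma>1 \<in> K" "\<gamma>2 \<in> K" "\<forall>\<eta>\<in>K. g \<gamma>1 \<eta> = g \<gamma>2 \<eta>" for \<gamma>1 \<gamma>2
    using nd[of \<gamma>2] that by blast
  define \<gamma> where "\<gamma> X = (SOME \<gamma>. \<gamma> \<in> K \<and> (\<forall>\<eta>\<in>K. g \<gamma> \<eta> = g (s X) \<eta>))" for X
  have \<gamma>K: "\<gamma> X \<in> K" and \<gamma>g: "\<And>\<eta>. \<eta> \<in> K \<Longrightarrow> g (\<gamma> X) \<eta> = g (s X) \<eta>" for X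
    using someI_ex[OF ex1_implies_ex[OF nd[of "s X"]]] unfolding \<gamma>_def by auto
  define nab where "nab X = s X - \<gamma> X" for X
  have \<gamma>add: "\<gamma> (X + Y) = \<gamma> X + \<gamma> Y" for X Y
  proof (rule uniq)
    show "\<gamma> (X + Y) \<in> K" by (rule \<gamma>K)
    show "\<gamma> X + \<gamma> Y \<in> K" using \<gamma>K[of X] \<gamma>K[of Y] by (simp add: Kmem R.add)
    show "\<forall>\<eta>\<in>K. g (\<gamma> (X + Y)) \<eta> = g (\<gamma> X + \<gamma> Y) \<eta>"
      by (simp add: \<gamma>g gadd S.add)
  qed
  have \<gamma>sc: "\<gamma> (sT h X) = sA h (\<gamma> X)" for h X
  proof (rule uniq)
    show "\<gamma> (sT h X) \<in> K" by (rule \<gamma>K)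
    show "sA h (\<gamma> X) \<in> K" using \<gamma>K[of X] by (simp add: Kmem R.scale)
    show "\<forall>\<eta>\<in>K. g (\<gamma> (sT h X)) \<eta> = g (sA h (\<gamma> X)) \<eta>"
      by (simp add: \<gamma>g gsc S.scale)
  qed
  have conn: "ordinary_connection sT sA \<rho> nab"
  proof -
    have "nab (X + Y) = nab X + nab Y" for X Y
      by (simp add: nab_def S.add \<gamma>add algebra_simps)
    moreover have "nab (sT h X) = sA h (nab X)" for h X
      by (simp add: nab_def S.scale \<gamma>sc module.scale_right_diff_distrib[OF mA])
    moreover have "\<rho> (nab X) = X" for X
      using \<gamma>K[of X] by (simp add: nab_def R.diff rs Kmem)
    ultimately show ?thesis
      by (simp add: ordinary_connection_def module_hom_def module_hom_axioms_def
          mA mT)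
  qed
  have orth: "\<forall>X. \<forall>\<eta>\<in>algebroid_kernel \<rho>. g (nab X) \<eta> = 0"
    by (simp add: nab_def gdiff \<gamma>g K_def[symmetric])
  show ?thesis
  proof (rule ex1I[where a=nab])
    show "ordinary_connection sT sA \<rho> nab \<and> (\<forall>X. \<forall>\<eta>\<in>algebroid_kernel \<rho>. g (nab X) \<eta> = 0)"
      using conn orth by blast
  next
    fix n2 assume h2: "ordinary_connection sT sA \<rho> n2 \<and> (\<forall>X. \<forall>\<eta>\<in>algebroid_kernel \<rho>. g (n2 X) \<eta> = 0)"
    show "n2 = nab"
    proof
      fix X
      have r2: "\<rho> (n2 X) = X" using h2 by (simp add: ordinary_connection_def)
      have r1: "\<rho> (nab X) = X" using conn by (simp add: ordinary_connection_def)
      have "n2 X - nab X = 0"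
      proof (rule uniq)
        show "n2 X - nab X \<in> K" by (simp add: Kmem R.diff r1 r2)
        show "(0::'a) \<in> K" by (simp add: Kmem)
        show "\<forall>\<eta>\<in>K. g (n2 X - nab X) \<eta> = g 0 \<eta>"
          using h2 orth by (simp add: gdiff g0 K_def)
      qed
      then show "n2 X = nab X" by simp
    qed
  qed
qed

end
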